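(* Let $p$ be a prime and $n\geq 2$. If $B$ is a minimal blocking set with respect to lines in $PG(n,p)$ such that every line meets $B$ in a number of points congruent to $1\pmod p$, then $B$ is a hyperplane.
   Context: A blocking set with respect to lines is a point set meeting every line. It is minimal if no proper subset is a blocking set. *)

theory Defs
  imports Main "HOL-Computational_Algebra.Primes"
begin

text \<open>Projective space PG(n,q) over a finite field 'a (of order q), with homogeneous
coordinates indexed by a finite type 'n of cardinality n+1.
A point is a 1-dimensional subspace, represented as its set of nonzero vectors.\<close>

definition pt :: "('n \<Rightarrow> 'a::field) \<Rightarrow> ('n \<Rightarrow> 'a) set" where
  "pt v = {(\<lambda>i. c * v i) | c. c \<noteq> 0}"

definition pg_points :: "('n::finite \<Rightarrow> 'a::{field,finite}) set set" where
  "pg_points = {pt v | v. v \<noteq> (\<lambda>i. 0)}"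

definition lin_indep2 :: "('n \<Rightarrow> 'a::field) \<Rightarrow> ('n \<Rightarrow> 'a) \<Rightarrow> bool" where
  "lin_indep2 u w \<longleftrightarrow> (\<forall>a b. (\<lambda>i. a * u i + b * w i) = (\<lambda>i. 0) \<longrightarrow> a = 0 \<and> b = 0)"

definition pg_line :: "('n \<Rightarrow> 'a::field) \<Rightarrow> ('n \<Rightarrow> 'a) \<Rightarrow> ('n \<Rightarrow> 'a) set set" where
  "pg_line u w = {pt (\<lambda>i. a * u i + b * w i) | a b. a \<noteq> 0 \<or> b \<noteq> 0}"

definition pg_lines :: "('n::finite \<Rightarrow> 'a::{field,finite}) set set set" where
  "pg_lines = {pg_line u w | u w. lin_indep2 u w}"

definition pg_hyperplanes :: "('n::finite \<Rightarrow> 'a::{field,finite}) set set set" where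
  "pg_hyperplanes = {{pt x | x. x \<noteq> (\<lambda>i. 0) \<and> (\<Sum>i\<in>UNIV. a i * x i) = 0} | a. a \<noteq> (\<lambda>i. 0)}"

definition blocking_set :: "('n::finite \<Rightarrow> 'a::{field,finite}) set set \<Rightarrow> bool" where
  "blocking_set B \<longleftrightarrow> B \<subseteq> pg_points \<and> (\<forall>L\<in>pg_lines. B \<inter> L \<noteq> {})"

definition minimal_blocking_set :: "('n::finite \<Rightarrow> 'a::{field,finite}) set set \<Rightarrow> bool" where
  "minimal_blocking_set B \<longleftrightarrow> blocking_set B \<and> (\<forall>B'. B' \<subset> B \<longrightarrow> \<not> blocking_set B')"

end

theory Submission
  imports Defs
begin

lemma pt_scale: "(c::'a::field) \<noteq> 0 \<Longrightarrow> pt (\<lambda>i. c * v i) = pt v"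
proof -
  assume c: "c \<noteq> 0"
  show ?thesis
  proof
    show "pt (\<lambda>i. c * v i) \<subseteq> pt v"
    proof
      fix y assume "y \<in> pt (\<lambda>i. c * v i)"
      then obtain d where d: "d \<noteq> 0" "y = (\<lambda>i. d * (c * v i))" unfolding pt_def by auto
      hence "y = (\<lambda>i. (d * c) * v i)" by (simp add: mult.assoc)
      moreover have "d * c \<noteq> 0" using d c by simp
      ultimately show "y \<in> pt v" unfolding pt_def by blast
    qed
  next
    show "pt v \<subseteq> pt (\<lambda>i. c * v i)"
    proof
      fix y assume "y \<in> pt v"
      then obtain d where d: "d \<noteq> 0" "y = (\<lambda>i. d * v i)" unfolding pt_def by auto
      have "y = (\<lambda>i. (d / c) * (c * v i))" using d c by (auto simp: fun_eq_iff)
      moreover have "d / c \<noteq> 0" using d c by simp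
      ultimately show "y \<in> pt (\<lambda>i. c * v i)" unfolding pt_def by blast
    qed
  qed
qed

lemma pt_self: "v \<in> pt (v::'n \<Rightarrow> 'a::field)"
  unfolding pt_def by (auto intro!: exI[where x=1])

lemma pt_eqD: "pt v = pt (w::'n \<Rightarrow> 'a::field) \<Longrightarrow> \<exists>c. c \<noteq> 0 \<and> v = (\<lambda>i. c * w i)"
  using pt_self[of v] unfolding pt_def by auto

definition inS :: "('n \<Rightarrow> 'a::field) set set \<Rightarrow> ('n \<Rightarrow> 'a) \<Rightarrow> bool" where
  "inS B v \<longleftrightarrow> v = (\<lambda>i. 0) \<or> pt v \<in> B"

lemma scale_closed:
  assumes "inS B v" shows "inS B (\<lambda>i. (c::'a::field) * v i)"
proof (cases "c = 0 \<or> v = (\<lambda>i. 0)")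
  case True thus ?thesis unfolding inS_def by (auto simp: fun_eq_iff)
next
  case False
  hence "pt v \<in> B" using assms unfolding inS_def by auto
  thus ?thesis using False pt_scale[of c v] unfolding inS_def by auto
qed

lemma line_card:
  fixes u w :: "'n::finite \<Rightarrow> 'a::{field,finite}"
  shows "card (pg_line u w) \<le> card (UNIV::'a set) + 1"
proof -
  have sub: "pg_line u w \<subseteq> insert (pt w) (range (\<lambda>t. pt (\<lambda>i. u i + t * w i)))"
  proof
    fix P assume "P \<in> pg_line u w"
    then obtain a b where ab: "a \<noteq> 0 \<or> b \<noteq> 0" "P = pt (\<lambda>i. a * u i + b * w i)"
      unfolding pg_line_def by auto
    show "P \<in> insert (pt w) (range (\<lambda>t. pt (\<lambda>i. u i + t * w i)))"
    proof (cases "a = 0")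
      case True
      hence "P = pt (\<lambda>i. b * w i)" using ab by simp
      thus ?thesis using pt_scale[of b w] ab True by auto
    next
      case False
      have "(\<lambda>i. a * u i + b * w i) = (\<lambda>i. a * (u i + (b/a) * w i))"
        using False by (auto simp: fun_eq_iff field_simps)
      hence "P = pt (\<lambda>i. u i + (b/a) * w i)" using ab pt_scale[OF False] by simp
      thus ?thesis by blast
    qed
  qed
  have "card (pg_line u w) \<le> card (insert (pt w) (range (\<lambda>t. pt (\<lambda>i. u i + t * w i))))"
    by (rule card_mono[OF _ sub]) simp
  also have "\<dots> \<le> card (range (\<lambda>t. pt (\<lambda>i. u i + t * w i))) + 1"
    by (simp add: card_insert_if)
  also have "card (range (\<lambda>t. pt (\<lambda>i. u i + t * w i))) \<le> card (UNIV::'a set)"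
    by (rule card_image_le) simp
  finally show ?thesis by simp
qed

lemma in_line: "a \<noteq> 0 \<or> b \<noteq> 0 \<Longrightarrow> pt (\<lambda>i. a * u i + b * w i) \<in> pg_line u w"
  unfolding pg_line_def by blast

lemma full_line:
  fixes B :: "('n::finite \<Rightarrow> 'a::{field,finite}) set set"
  assumes p: "prime p" "card (UNIV::'a set) = p"
    and cond: "\<forall>L\<in>pg_lines. card (B \<inter> L) mod p = 1"
    and L: "L = pg_line u w" "lin_indep2 u w"
    and PQ: "P \<in> B" "Q \<in> B" "P \<in> L" "Q \<in> L" "P \<noteq> Q"
  shows "L \<subseteq> B"
proof -
  have Ll: "L \<in> pg_lines" using L unfolding pg_lines_def by blast
  have fin: "finite L" by simp
  have "{P, Q} \<subseteq> B \<inter> L" using PQ by auto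
  hence k2: "2 \<le> card (B \<inter> L)"
    using card_mono[of "B \<inter> L" "{P,Q}"] PQ by auto
  have kL: "card (B \<inter> L) \<le> card L" by (rule card_mono) auto
  have Lc: "card L \<le> p + 1" using line_card[of u w] L p by simp
  have km: "card (B \<inter> L) mod p = 1" using cond Ll by blast
  have p2: "p \<ge> 2" using p prime_ge_2_nat by blast
  have "card (B \<inter> L) = p + 1"
  proof (rule ccontr)
    assume "card (B \<inter> L) \<noteq> p + 1"
    hence "card (B \<inter> L) \<le> p" using kL Lc by simp
    moreover { assume "card (B \<inter> L) < p" hence "card (B \<inter> L) mod p = card (B \<inter> L)" by simp
      hence False using km k2 by simp }
    moreover { assume "card (B \<inter> L) = p" hence False using km p2 by simp }
    ultimately show False by linarith
  qed
  hence "card (B \<inter> L) = card L" using kL Lc by simp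
  hence "B \<inter> L = L" using card_subset_eq[OF fin, of "B \<inter> L"] by auto
  thus ?thesis by auto
qed

lemma add_closed:
  fixes B :: "('n::finite \<Rightarrow> 'a::{field,finite}) set set"
  assumes H: "\<And>L u w P Q. L = pg_line u w \<Longrightarrow> lin_indep2 u w \<Longrightarrow> P \<in> B \<Longrightarrow> Q \<in> B
       \<Longrightarrow> P \<in> L \<Longrightarrow> Q \<in> L \<Longrightarrow> P \<noteq> Q \<Longrightarrow> L \<subseteq> B"
    and u: "inS B u" and w: "inS B w"
  shows "inS B (\<lambda>i. u i + w i)"
proof (cases "u = (\<lambda>i. 0) \<or> w = (\<lambda>i. 0)")
  case True thus ?thesis using u w by auto
next
  case False
  hence pu: "pt u \<in> B" and pw: "pt w \<in> B" using u w unfolding inS_def by auto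
  show ?thesis
  proof (cases "lin_indep2 u w")
    case True
    have a: "pt u \<in> pg_line u w" using in_line[of 1 0 u w] by simp
    have b: "pt w \<in> pg_line u w" using in_line[of 0 1 u w] by simp
    have ne: "pt u \<noteq> pt w"
    proof
      assume "pt u = pt w"
      then obtain c where "c \<noteq> 0" "u = (\<lambda>i. c * w i)" using pt_eqD by blast
      hence "(\<lambda>i. 1 * u i + (- c) * w i) = (\<lambda>i. 0)" by auto
      thus False using True unfolding lin_indep2_def by (metis one_neq_zero)
    qed
    have "pg_line u w \<subseteq> B" by (rule H[OF refl True pu pw a b ne])
    moreover have "pt (\<lambda>i. u i + w i) \<in> pg_line u w" using in_line[of 1 1 u w] by simp
    ultimately show ?thesis unfolding inS_def by auto
  next
    case False2: False
    then obtain a b where ab: "(\<lambda>i. a * u i + b * w i) = (\<lambda>i. 0)" "a \<noteq> 0 \<or> b \<noteq> 0"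
      unfolding lin_indep2_def by blast
    show ?thesis
    proof (cases "b = 0")
      case True
      hence "a \<noteq> 0" using ab by simp
      hence "u = (\<lambda>i. 0)" using ab True by (auto simp: fun_eq_iff)
      thus ?thesis using False by simp
    next
      case b: False
      have "(\<lambda>i. u i + w i) = (\<lambda>i. (1 - a/b) * u i)"
      proof
        fix i have "a * u i + b * w i = 0" using ab fun_cong[OF ab(1), of i] by simp
        hence "w i = - (a/b) * u i" using b by (simp add: field_simps) (metis add_eq_0_iff mult_minus_left)
        thus "u i + w i = (1 - a/b) * u i" by (simp add: algebra_simps)
      qed
      thus ?thesis using scale_closed[OF u] by simp
    qed
  qed
qed


lemma sub_closed:
  assumes A: "\<And>u w. inS B u \<Longrightarrow> inS B w \<Longrightarrow> inS B (\<lambda>i. u i + w i)"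
    and u: "inS B u" and w: "inS B w"
  shows "inS B (\<lambda>i. u i - (w i::'a::field))"
proof -
  have "inS B (\<lambda>i. u i + (\<lambda>i. (-1) * w i) i)" using A[OF u scale_closed[OF w, of "-1"]] by simp
  thus ?thesis by simp
qed

lemma hyp0_blocking:
  fixes i0 :: "'n::finite"
  shows "blocking_set ({pt x | x. x \<noteq> (\<lambda>i. 0) \<and> x i0 = (0::'a::{field,finite})})"
  unfolding blocking_set_def
proof (intro conjI ballI)
  show "{pt x | x. x \<noteq> (\<lambda>i. 0) \<and> x i0 = (0::'a)} \<subseteq> pg_points" unfolding pg_points_def by blast
next
  fix L :: "('n \<Rightarrow> 'a) set set" assume "L \<in> pg_lines"
  then obtain u w where L: "L = pg_line u w" "lin_indep2 u w" unfolding pg_lines_def by blast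
  show "{pt x | x. x \<noteq> (\<lambda>i. 0) \<and> x i0 = 0} \<inter> L \<noteq> {}"
  proof (cases "u i0 = 0")
    case True
    have "u \<noteq> (\<lambda>i. 0)"
    proof
      assume "u = (\<lambda>i. 0)" hence "(\<lambda>i. 1 * u i + 0 * w i) = (\<lambda>i. 0)" by simp
      thus False using L(2) unfolding lin_indep2_def by (metis one_neq_zero)
    qed
    moreover have "pt u \<in> L" using in_line[of 1 0 u w] L by simp
    ultimately show ?thesis using True by blast
  next
    case False
    define y where "y = (\<lambda>i. w i0 * u i + (- u i0) * w i)"
    have "y \<noteq> (\<lambda>i. 0)"
    proof
      assume "y = (\<lambda>i. 0)"
      hence "(\<lambda>i. w i0 * u i + (- u i0) * w i) = (\<lambda>i. 0)" unfolding y_def .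
      hence "- u i0 = 0" using L(2) unfolding lin_indep2_def by blast
      thus False using False by simp
    qed
    moreover have "y i0 = 0" unfolding y_def by (simp add: algebra_simps)
    moreover have "pt y \<in> L" using in_line[of "w i0" "- u i0" u w] L False unfolding y_def by simp
    ultimately show ?thesis by blast
  qed
qed

theorem mainTheorem9:
  fixes B :: "('n::finite \<Rightarrow> 'a::{field,finite}) set set"
    and p n :: nat
  assumes "prime p" and "card (UNIV :: 'a set) = p"
    and "card (UNIV :: 'n set) = n + 1" and "n \<ge> 2"
    and "minimal_blocking_set B"
    and "\<forall>L\<in>pg_lines. card (B \<inter> L) mod p = 1"
  shows "B \<in> pg_hyperplanes"
proof -
  have mb: "blocking_set B" "\<And>B'. B' \<subset> B \<Longrightarrow> \<not> blocking_set B'"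
    using assms(5) unfolding minimal_blocking_set_def by auto
  have Bp: "B \<subseteq> pg_points" using mb(1) unfolding blocking_set_def by auto
  have H: "\<And>L u w P Q. L = pg_line u w \<Longrightarrow> lin_indep2 u w \<Longrightarrow> P \<in> B \<Longrightarrow> Q \<in> B
       \<Longrightarrow> P \<in> L \<Longrightarrow> Q \<in> L \<Longrightarrow> P \<noteq> Q \<Longrightarrow> L \<subseteq> B"
    using full_line[OF assms(1) assms(2) assms(6)] by blast
  have add: "inS B (\<lambda>i. u i + w i)" if "inS B u" "inS B w" for u w
    by (rule add_closed[OF _ that], rule H, assumption+)
  have sub: "inS B (\<lambda>i. u i - w i)" if "inS B u" "inS B w" for u w
    by (rule sub_closed[OF _ that], rule add, assumption+)
  have zero: "inS B (\<lambda>i. 0)" unfolding inS_def by simp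
  obtain i0 :: 'n where True by simp
  define H0 where "H0 = {pt x | x. x \<noteq> (\<lambda>i. 0) \<and> x i0 = (0::'a)}"
  have "B \<noteq> pg_points"
  proof
    assume eq: "B = pg_points"
    define e where "e = (\<lambda>j. if j = i0 then (1::'a) else 0)"
    have e0: "e \<noteq> (\<lambda>i. 0)" unfolding e_def by (auto simp: fun_eq_iff)
    have "pt e \<notin> H0"
    proof
      assume "pt e \<in> H0"
      then obtain x where x: "pt e = pt x" "x i0 = 0" unfolding H0_def by auto
      then obtain c where "e = (\<lambda>i. c * x i)" using pt_eqD by blast
      hence "e i0 = 0" using x by simp
      thus False unfolding e_def by simp
    qed
    moreover have "pt e \<in> pg_points" using e0 unfolding pg_points_def by blast
    moreover have "H0 \<subseteq> pg_points" unfolding H0_def pg_points_def by blast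
    ultimately have "H0 \<subset> B" using eq by blast
    thus False using mb(2) hyp0_blocking[of i0] unfolding H0_def by blast
  qed
  then obtain x0 where x0: "x0 \<noteq> (\<lambda>i. 0)" "pt x0 \<notin> B"
    using Bp unfolding pg_points_def by blast
  have nx0: "\<not> inS B x0" using x0 unfolding inS_def by simp
  have dec: "\<exists>c. inS B (\<lambda>i. v i - c * x0 i)" for v
  proof -
    have "\<exists>a b. (a \<noteq> 0 \<or> b \<noteq> 0) \<and> inS B (\<lambda>i. a * x0 i + b * v i)"
    proof (cases "lin_indep2 x0 v")
      case True
      hence "pg_line x0 v \<in> pg_lines" unfolding pg_lines_def by blast
      then obtain P where "P \<in> B" "P \<in> pg_line x0 v" using mb(1) unfolding blocking_set_def by blast
      then obtain a b where "a \<noteq> 0 \<or> b \<noteq> 0" "pt (\<lambda>i. a * x0 i + b * v i) \<in> B"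
        unfolding pg_line_def by blast
      thus ?thesis unfolding inS_def by blast
    next
      case False
      then obtain a b where "(\<lambda>i. a * x0 i + b * v i) = (\<lambda>i. 0)" "a \<noteq> 0 \<or> b \<noteq> 0"
        unfolding lin_indep2_def by blast
      thus ?thesis using zero by metis
    qed
    then obtain a b where ab: "a \<noteq> 0 \<or> b \<noteq> 0" "inS B (\<lambda>i. a * x0 i + b * v i)" by blast
    have b: "b \<noteq> 0"
    proof
      assume b0: "b = 0"
      hence a: "a \<noteq> 0" using ab by simp
      have "inS B (\<lambda>i. (1/a) * (a * x0 i + b * v i))" by (rule scale_closed[OF ab(2)])
      moreover have "(\<lambda>i. (1/a) * (a * x0 i + b * v i)) = x0" using a b0 by auto
      ultimately show False using nx0 by simp
    qed
    have "inS B (\<lambda>i. (1/b) * (a * x0 i + b * v i))" by (rule scale_closed[OF ab(2)])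
    moreover have "(\<lambda>i. (1/b) * (a * x0 i + b * v i)) = (\<lambda>i. v i - (- a / b) * x0 i)"
      using b by (auto simp: fun_eq_iff field_simps)
    ultimately have "inS B (\<lambda>i. v i - (- a / b) * x0 i)" by simp
    thus ?thesis by blast
  qed
  define ee where "ee = (\<lambda>k::'n. \<lambda>j::'n. if j = k then (1::'a) else 0)"
  define a where "a = (\<lambda>k. SOME c. inS B (\<lambda>j. ee k j - c * x0 j))"
  have aP: "inS B (\<lambda>j. ee k j - a k * x0 j)" for k
    unfolding a_def using someI_ex[OF dec[of "ee k"]] .
  have ind: "finite F \<Longrightarrow> inS B (\<lambda>j. (if j \<in> F then v j else 0) - (\<Sum>i\<in>F. a i * v i) * x0 j)" for F v
  proof (induction F rule: finite_induct)
    case empty show ?case using zero by simp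
  next
    case (insert k F)
    have "inS B (\<lambda>j. (\<lambda>j. (if j \<in> F then v j else 0) - (\<Sum>i\<in>F. a i * v i) * x0 j) j
         + (\<lambda>j. v k * (ee k j - a k * x0 j)) j)"
      by (rule add[OF insert.IH scale_closed[OF aP]])
    moreover have "(\<lambda>j. (\<lambda>j. (if j \<in> F then v j else 0) - (\<Sum>i\<in>F. a i * v i) * x0 j) j
         + (\<lambda>j. v k * (ee k j - a k * x0 j)) j) =
         (\<lambda>j. (if j \<in> insert k F then v j else 0) - (\<Sum>i\<in>insert k F. a i * v i) * x0 j)"
      using insert.hyps by (auto simp: fun_eq_iff ee_def algebra_simps)
    ultimately show ?case by simp
  qed
  have full: "inS B (\<lambda>j. v j - (\<Sum>i\<in>UNIV. a i * v i) * x0 j)" for v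
    using ind[of UNIV v] by simp
  have key: "inS B v \<longleftrightarrow> (\<Sum>i\<in>UNIV. a i * v i) = 0" for v
  proof
    assume "inS B v"
    hence s: "inS B (\<lambda>j. v j - (v j - (\<Sum>i\<in>UNIV. a i * v i) * x0 j))"
      using sub full by blast
    show "(\<Sum>i\<in>UNIV. a i * v i) = 0"
    proof (rule ccontr)
      assume ne: "(\<Sum>i\<in>UNIV. a i * v i) \<noteq> 0"
      have "inS B (\<lambda>j. (1 / (\<Sum>i\<in>UNIV. a i * v i)) *
              (v j - (v j - (\<Sum>i\<in>UNIV. a i * v i) * x0 j)))"
        by (rule scale_closed[OF s])
      moreover have "(\<lambda>j. (1 / (\<Sum>i\<in>UNIV. a i * v i)) *
              (v j - (v j - (\<Sum>i\<in>UNIV. a i * v i) * x0 j))) = x0"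
        using ne by auto
      ultimately show False using nx0 by simp
    qed
  next
    assume "(\<Sum>i\<in>UNIV. a i * v i) = 0"
    thus "inS B v" using full[of v] by simp
  qed
  have a0: "a \<noteq> (\<lambda>i. 0)"
  proof
    assume "a = (\<lambda>i. 0)"
    hence "inS B x0" using key[of x0] by simp
    thus False using nx0 by simp
  qed
  have "B = {pt x | x. x \<noteq> (\<lambda>i. 0) \<and> (\<Sum>i\<in>UNIV. a i * x i) = 0}"
  proof
    show "B \<subseteq> {pt x | x. x \<noteq> (\<lambda>i. 0) \<and> (\<Sum>i\<in>UNIV. a i * x i) = 0}"
    proof
      fix P assume P: "P \<in> B"
      then obtain x where x: "P = pt x" "x \<noteq> (\<lambda>i. 0)" using Bp unfolding pg_points_def by blast
      hence "inS B x" using P unfolding inS_def by simp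
      thus "P \<in> {pt x | x. x \<noteq> (\<lambda>i. 0) \<and> (\<Sum>i\<in>UNIV. a i * x i) = 0}" using key x by blast
    qed
  next
    show "{pt x | x. x \<noteq> (\<lambda>i. 0) \<and> (\<Sum>i\<in>UNIV. a i * x i) = 0} \<subseteq> B"
      using key unfolding inS_def by blast
  qed
  thus ?thesis using a0 unfolding pg_hyperplanes_def by blast
qed

end
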